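(* Let $\sigma$ be a completely erasing $k$-block substitution with $w_\epsilon\ne1^k$ that satisfies the optimality condition. Then $f_\sigma$ is Li-Yorke chaotic. That is, there exists an uncountable set $S\subset\mathbb I$ such that for all distinct $x,y\in S$, $$\liminf_{n\to\infty}|f_\sigma^n(x)-f_\sigma^n(y)|=0\quad\text{and}\quad\limsup_{n\to\infty}|f_\sigma^n(x)-f_\sigma^n(y)|>0.$$
   Context: Notation: $\mathbb I=[0,1]$. $\{0,1\}^*$ and $\{0,1\}^\omega$ denote finite and infinite binary words, and $\epsilon$ is the empty word. For a word $w$, set $0.w=\sum_iw_i2^{-i}$. For $x\in(0,1]$, $\widetilde x$ is the unique infinite binary expansion of $x$ not ending in $0^\infty$. Fix $k\ge2$. An erasing $k$-block substitution is a map $\sigma:\{0,1\}^k\to\{0,1\}^*$ with exactly one block $w_\epsilon$ such that $\sigma(w_\epsilon)=\epsilon$. $\sigma$ is alternating if there are $\sigma_1,\dots,\sigma_k:\{0,1\}\to\{0,1\}^*$ with $\sigma(b_1\cdots b_k)=\sigma_1(b_1)\cdots\sigma_k(b_k)$. It is then extended to all finite or infinite words by $\sigma(u)=\prod_j\sigma_{((j-1)\bmod k)+1}(u_j)$. $\sigma$ is completely erasing if it is erasing and alternating, and every $w\in\{0,1\}^*$ satisfies $\sigma^n(w)=\epsilon$ for some $n\in\mathbb N$. The map $f_\sigma:\mathbb I\to\mathbb I$ is defined by $f_\sigma(x)=0.\sigma(\widetilde x)$ if $x\in(0,1]$ and $\widetilde x\neq w_\epsilon^\infty$, and $f_\sigma(x)=0$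 otherwise. Optimality condition: every $w\in\{0,1\}^\omega$ can be written as $w=\prod_{i\ge1}\sigma(b_i)$ with blocks $b_i\in\{0,1\}^k$ satisfying $\sigma(b_i)\ne\epsilon$. *)

theory Defs
  imports Complex_Main "HOL-Library.Extended_Real" "HOL-Library.Liminf_Limsup" "HOL-Library.Countable_Set"
begin

text \<open>Binary letters are booleans (True = 1, False = 0).
An alternating k-block substitution is given by its letter maps
s 0, ..., s (k-1) (the paper's sigma_1, ..., sigma_k).\<close>

definition bit :: "bool \<Rightarrow> real" where
  "bit b = (if b then 1 else 0)"

definition fin_val :: "bool list \<Rightarrow> real" where
  "fin_val w = (\<Sum>i<length w. bit (w ! i) / 2 ^ (i + 1))"

definition inf_val :: "(nat \<Rightarrow> bool) \<Rightarrow> real" where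
  "inf_val w = (\<Sum>i. bit (w i) / 2 ^ (i + 1))"

definition sigma_fin :: "(nat \<Rightarrow> bool \<Rightarrow> bool list) \<Rightarrow> nat \<Rightarrow> bool list \<Rightarrow> bool list" where
  "sigma_fin s k u = concat (map (\<lambda>j. s (j mod k) (u ! j)) [0..<length u])"

definition erasing :: "(nat \<Rightarrow> bool \<Rightarrow> bool list) \<Rightarrow> nat \<Rightarrow> bool" where
  "erasing s k \<longleftrightarrow> (\<exists>!b. length b = k \<and> sigma_fin s k b = [])"

definition w_eps :: "(nat \<Rightarrow> bool \<Rightarrow> bool list) \<Rightarrow> nat \<Rightarrow> bool list" where
  "w_eps s k = (THE b. length b = k \<and> sigma_fin s k b = [])"

text \<open>Completely erasing (alternating is built into the representation by letter maps).\<close>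
definition completely_erasing :: "(nat \<Rightarrow> bool \<Rightarrow> bool list) \<Rightarrow> nat \<Rightarrow> bool" where
  "completely_erasing s k \<longleftrightarrow> erasing s k \<and>
     (\<forall>w. \<exists>n. (sigma_fin s k ^^ n) w = [])"

definition pref_len :: "(nat \<Rightarrow> bool \<Rightarrow> bool list) \<Rightarrow> nat \<Rightarrow> (nat \<Rightarrow> bool) \<Rightarrow> nat \<Rightarrow> nat" where
  "pref_len s k u j = (\<Sum>m<j. length (s (m mod k) (u m)))"

text \<open>0.sigma(u) for an infinite word u, where sigma(u) is the (possibly finite)
  concatenation prod_j sigma_{(j mod k)+1}(u_j); written out as a series.\<close>
definition sigma_val :: "(nat \<Rightarrow> bool \<Rightarrow> bool list) \<Rightarrow> nat \<Rightarrow> (nat \<Rightarrow> bool) \<Rightarrow> real" where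
  "sigma_val s k u = (\<Sum>j. fin_val (s (j mod k) (u j)) / 2 ^ pref_len s k u j)"

definition tilde :: "real \<Rightarrow> (nat \<Rightarrow> bool)" where
  "tilde x = (THE w. (\<forall>N. \<exists>m\<ge>N. w m) \<and> inf_val w = x)"

definition f_sigma :: "(nat \<Rightarrow> bool \<Rightarrow> bool list) \<Rightarrow> nat \<Rightarrow> real \<Rightarrow> real" where
  "f_sigma s k x = (if 0 < x \<and> x \<le> 1 \<and> tilde x \<noteq> (\<lambda>i. w_eps s k ! (i mod k))
                    then sigma_val s k (tilde x) else 0)"

definition optimal :: "(nat \<Rightarrow> bool \<Rightarrow> bool list) \<Rightarrow> nat \<Rightarrow> bool" where
  "optimal s k \<longleftrightarrow> (\<forall>w :: nat \<Rightarrow> bool. \<exists>b :: nat \<Rightarrow> bool list.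
     (\<forall>i. length (b i) = k \<and> sigma_fin s k (b i) \<noteq> []) \<and>
     (\<forall>i j. j < length (sigma_fin s k (b i)) \<longrightarrow>
        w ((\<Sum>m<i. length (sigma_fin s k (b m))) + j) = sigma_fin s k (b i) ! j))"

end

theory Submission
  imports Defs
begin

lemma bit_ge0: "0 \<le> bit b" and bit_le1: "bit b \<le> 1"
  by (auto simp: bit_def)

lemma geo_tail_sums: "(\<lambda>l. 1 / (2::real) ^ (l + n + 1)) sums (1 / 2 ^ n)"
proof -
  have "(\<lambda>l. (1/2::real) ^ l) sums (1 / (1 - 1/2))" by (rule geometric_sums) simp
  then have "(\<lambda>l. (1 / 2 ^ (n+1)) * (1/2::real) ^ l) sums ((1 / 2 ^ (n+1)) * (1 / (1 - 1/2)))"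
    by (rule sums_mult)
  moreover have "(\<lambda>l. (1 / 2 ^ (n+1)) * (1/2::real) ^ l) = (\<lambda>l. 1 / (2::real) ^ (l + n + 1))"
    by (auto simp: power_add power_divide)
  moreover have "(1 / 2 ^ (n+1)) * (1 / (1 - 1/2)) = (1 / (2::real) ^ n)" by simp
  ultimately show ?thesis by simp
qed

lemma term_le: "bit b / (2::real) ^ m \<le> 1 / 2 ^ m"
  unfolding bit_def by (cases b) auto

lemma tail_summable: "summable (\<lambda>l. bit (v (l + n)) / (2::real) ^ (l + n + 1))"
  by (rule summable_comparison_test'[OF sums_summable[OF geo_tail_sums[of n]], of 0])
     (simp add: bit_def)

lemma inf_summable: "summable (\<lambda>i. bit (v i) / (2::real) ^ (i + 1))"
  using tail_summable[of v 0] by simp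

lemma tail_bounds:
  "0 \<le> (\<Sum>l. bit (v (l + n)) / (2::real) ^ (l + n + 1))"
  "(\<Sum>l. bit (v (l + n)) / (2::real) ^ (l + n + 1)) \<le> 1 / 2 ^ n"
proof -
  show "0 \<le> (\<Sum>l. bit (v (l + n)) / (2::real) ^ (l + n + 1))"
    by (rule suminf_nonneg[OF tail_summable]) (simp add: bit_def)
  show "(\<Sum>l. bit (v (l + n)) / (2::real) ^ (l + n + 1)) \<le> 1 / 2 ^ n"
  proof -
    have "(\<Sum>l. bit (v (l + n)) / (2::real) ^ (l + n + 1)) \<le> (\<Sum>l. 1 / (2::real) ^ (l + n + 1))"
      by (rule suminf_le[OF term_le tail_summable sums_summable[OF geo_tail_sums[of n]]])
    also have "\<dots> = 1 / 2 ^ n" by (rule sums_unique[OF geo_tail_sums[of n], symmetric])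
    finally show ?thesis .
  qed
qed

lemma tail_pos: "v (l + n) \<Longrightarrow> 0 < (\<Sum>l. bit (v (l + n)) / (2::real) ^ (l + n + 1))"
  by (rule suminf_pos2[OF tail_summable]) (auto simp: bit_def)

lemma inf_split: "inf_val v = (\<Sum>i<n. bit (v i) / (2::real) ^ (i + 1)) + (\<Sum>l. bit (v (l + n)) / (2::real) ^ (l + n + 1))"
  unfolding inf_val_def using suminf_split_initial_segment[OF inf_summable, of v n]
  by (simp add: add.commute)

lemma inf_val_bounds: "0 \<le> inf_val v" "inf_val v \<le> 1"
  using tail_bounds[of v 0] inf_split[of v 0] by auto

lemma inf_val_pos: "v i \<Longrightarrow> 0 < inf_val v"
  using tail_pos[of v i 0] inf_split[of v 0] by auto

lemma inf_val_close:
  assumes "\<And>i. i < n \<Longrightarrow> v i = w i"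
  shows "\<bar>inf_val v - inf_val w\<bar> \<le> 1 / 2 ^ n"
proof -
  have "(\<Sum>i<n. bit (v i) / (2::real) ^ (i + 1)) = (\<Sum>i<n. bit (w i) / (2::real) ^ (i + 1))"
    using assms by (intro sum.cong) auto
  then show ?thesis using inf_split[of v n] inf_split[of w n] tail_bounds[of v n] tail_bounds[of w n]
    by linarith
qed

lemma inf_val_TT: "v 0 \<Longrightarrow> v 1 \<Longrightarrow> 3/4 \<le> inf_val v"
  using inf_split[of v 2] tail_bounds[of v 2] by (simp add: bit_def numeral_2_eq_2)

lemma inf_val_FF: "\<not> v 0 \<Longrightarrow> \<not> v 1 \<Longrightarrow> inf_val v \<le> 1/4"
  using inf_split[of v 2] tail_bounds[of v 2] by (simp add: bit_def numeral_2_eq_2)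

lemma inf_val_inj:
  assumes v: "\<forall>N. \<exists>m\<ge>N. v m" and w: "\<forall>N. \<exists>m\<ge>N. w m" and eq: "inf_val v = inf_val w"
  shows "v = w"
proof (rule ccontr)
  assume "v \<noteq> w"
  then obtain j where "v j \<noteq> w j" by auto
  define i where "i = (LEAST j. v j \<noteq> w j)"
  have di: "v i \<noteq> w i" unfolding i_def by (rule LeastI) fact
  have below: "\<And>j. j < i \<Longrightarrow> v j = w j" unfolding i_def using not_less_Least by blast
  have key: "\<And>a b. (\<forall>N. \<exists>m\<ge>N. a m) \<Longrightarrow> (\<And>j. j < i \<Longrightarrow> a j = b j) \<Longrightarrow> a i \<Longrightarrow> \<not> b i \<Longrightarrow> inf_val b < inf_val a"
  proof -
    fix a b :: "nat \<Rightarrow> bool"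
    assume inf: "\<forall>N. \<exists>m\<ge>N. a m" and bl: "\<And>j. j < i \<Longrightarrow> a j = b j" and ai: "a i" and bi: "\<not> b i"
    obtain m where m: "m \<ge> Suc i" "a m" using inf by blast
    have "a ((m - Suc i) + Suc i)" using m by simp
    then have tp: "0 < (\<Sum>l. bit (a (l + Suc i)) / (2::real) ^ (l + Suc i + 1))" by (rule tail_pos)
    have ps: "(\<Sum>j<i. bit (a j) / (2::real) ^ (j + 1)) = (\<Sum>j<i. bit (b j) / (2::real) ^ (j + 1))"
      using bl by (intro sum.cong) auto
    show "inf_val b < inf_val a"
    proof -
      have ba: "bit (a i) = 1" "bit (b i) = 0" using ai bi by (auto simp: bit_def)
      have sa: "(\<Sum>j<Suc i. bit (a j) / (2::real) ^ (j + 1)) = (\<Sum>j<i. bit (a j) / (2::real) ^ (j + 1)) + 1 / 2 ^ (i+1)"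
        using ba by simp
      have sb: "(\<Sum>j<Suc i. bit (b j) / (2::real) ^ (j + 1)) = (\<Sum>j<i. bit (b j) / (2::real) ^ (j + 1))"
        using ba by simp
      have ia: "inf_val a = (\<Sum>j<Suc i. bit (a j) / (2::real) ^ (j + 1)) + (\<Sum>l. bit (a (l + Suc i)) / (2::real) ^ (l + Suc i + 1))"
        by (rule inf_split)
      have ib: "inf_val b = (\<Sum>j<Suc i. bit (b j) / (2::real) ^ (j + 1)) + (\<Sum>l. bit (b (l + Suc i)) / (2::real) ^ (l + Suc i + 1))"
        by (rule inf_split)
      have tb: "(\<Sum>l. bit (b (l + Suc i)) / (2::real) ^ (l + Suc i + 1)) \<le> 1 / 2 ^ Suc i"
        by (rule tail_bounds)
      show ?thesis using ia ib sa sb tb tp ps by simp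
    qed
  qed
  show False
  proof (cases "v i")
    case True
    have "\<not> w i" using True di by simp
    have "inf_val w < inf_val v" by (rule key[OF v below True \<open>\<not> w i\<close>])
    then show ?thesis using eq by simp
  next
    case False
    have wi: "w i" using False di by simp
    have bl: "\<And>j. j < i \<Longrightarrow> w j = v j" using below by simp
    have "inf_val v < inf_val w" by (rule key[OF w bl wi False])
    then show ?thesis using eq by simp
  qed
qed

lemma tilde_inf_val:
  assumes "\<forall>N. \<exists>m\<ge>N. v m"
  shows "tilde (inf_val v) = v"
  unfolding tilde_def
proof (rule the_equality)
  show "(\<forall>N. \<exists>m\<ge>N. v m) \<and> inf_val v = inf_val v" using assms by simp
  fix w assume "(\<forall>N. \<exists>m\<ge>N. w m) \<and> inf_val w = inf_val v"
  then show "w = v" using inf_val_inj[of w v] assms by blast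
qed

lemma fin_val_snoc: "fin_val (a @ [x]) = fin_val a + bit x / 2 ^ (length a + 1)"
  unfolding fin_val_def by (simp add: nth_append)

lemma fin_val_append: "fin_val (a @ b) = fin_val a + fin_val b / 2 ^ length a"
proof (induction b rule: rev_induct)
  case Nil then show ?case by (simp add: fin_val_def)
next
  case (snoc x xs)
  have e1: "fin_val (a @ xs @ [x]) = fin_val (a@xs) + bit x / (2 ^ length a * 2 ^ length xs * 2)"
    using fin_val_snoc[of "a@xs" x] by (simp add: power_add mult_ac)
  have e2: "fin_val (xs @ [x]) = fin_val xs + bit x / (2 ^ length xs * 2)"
    using fin_val_snoc[of xs x] by (simp add: mult_ac)
  show ?case using snoc.IH e1 e2 by (simp add: add_divide_distrib divide_divide_eq_left mult_ac)
qed

lemma fin_val_map: "fin_val (map v [0..<n]) = (\<Sum>i<n. bit (v i) / (2::real) ^ (i + 1))"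
  unfolding fin_val_def by simp

lemma uncount_fun: "uncountable (UNIV :: (nat \<Rightarrow> bool) set)"
proof
  assume "countable (UNIV :: (nat \<Rightarrow> bool) set)"
  then obtain g :: "nat \<Rightarrow> (nat \<Rightarrow> bool)" where g: "range g = UNIV"
    using uncountable_def by blast
  have "(\<lambda>i. \<not> g i i) \<in> range g" using g by simp
  then obtain n where "(\<lambda>i. \<not> g i i) = g n" by (rule rangeE)
  then have "g n n = (\<not> g n n)" by metis
  then show False by simp
qed

definition has1k :: "nat \<Rightarrow> bool list \<Rightarrow> bool" where
  "has1k k u \<longleftrightarrow> (\<exists>a b. u = a @ replicate k True @ b)"

locale LY =
  fixes s :: "nat \<Rightarrow> bool \<Rightarrow> bool list" and k :: nat
  assumes k2: "k \<ge> 2" and ce: "completely_erasing s k"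
    and wne: "w_eps s k \<noteq> replicate k True" and opt: "optimal s k"
begin

lemma kpos: "0 < k" using k2 by simp

fun sg :: "nat \<Rightarrow> bool list \<Rightarrow> bool list" where
  "sg p [] = []"
| "sg p (x # xs) = s (p mod k) x @ sg (Suc p) xs"

lemma sg_append: "sg p (a @ b) = sg p a @ sg (p + length a) b"
  by (induction a arbitrary: p) auto

lemma sg_snoc: "sg p (a @ [x]) = sg p a @ s ((p + length a) mod k) x"
  by (simp add: sg_append)

lemma sg_mod: "p mod k = q mod k \<Longrightarrow> sg p u = sg q u"
proof (induction u arbitrary: p q)
  case Nil then show ?case by simp
next
  case (Cons x xs)
  have "Suc p mod k = Suc q mod k" using Cons.prems by (metis mod_Suc_eq)
  from Cons.IH[OF this] have "sg (Suc p) xs = sg (Suc q) xs" .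
  moreover have "s (p mod k) x = s (q mod k) x" using Cons.prems by simp
  ultimately show ?case by simp
qed

lemma sigma_fin_sg: "sigma_fin s k u = sg 0 u"
proof (induction u rule: rev_induct)
  case Nil then show ?case by (simp add: sigma_fin_def)
next
  case (snoc x xs)
  have "sigma_fin s k (xs @ [x]) = sigma_fin s k xs @ s (length xs mod k) x"
    unfolding sigma_fin_def by (auto simp: nth_append intro!: arg_cong[where f=concat] map_cong)
  then show ?case using snoc by (simp add: sg_snoc)
qed

lemma sg_nil_iff: "sg p u = [] \<longleftrightarrow> (\<forall>j<length u. s ((p + j) mod k) (u ! j) = [])"
proof (induction u arbitrary: p)
  case Nil then show ?case by simp
next
  case (Cons x xs)
  show ?case using Cons[of "Suc p"] by (auto simp: All_less_Suc2)
qed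

lemma erasing: "erasing s k" using ce unfolding completely_erasing_def by simp

lemma weps: "length (w_eps s k) = k" "sigma_fin s k (w_eps s k) = []"
proof -
  have "length (w_eps s k) = k \<and> sigma_fin s k (w_eps s k) = []"
    unfolding w_eps_def by (rule theI') (use erasing in \<open>simp add: erasing_def\<close>)
  then show "length (w_eps s k) = k" "sigma_fin s k (w_eps s k) = []" by auto
qed

lemma weps_each: assumes "j < k" shows "s j (w_eps s k ! j) = []"
proof -
  have "sg 0 (w_eps s k) = []" using weps(2) by (simp only: sigma_fin_sg)
  then have "\<forall>j<length (w_eps s k). s ((0 + j) mod k) (w_eps s k ! j) = []" by (simp only: sg_nil_iff)
  moreover have jl: "j < length (w_eps s k)" using weps(1) assms by simp
  ultimately have "s ((0 + j) mod k) (w_eps s k ! j) = []" by blast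
  moreover have "(0 + j) mod k = j" using assms by simp
  ultimately show ?thesis by simp
qed

lemma pad: "sg p (drop (p mod k) (w_eps s k)) = []"
proof -
  have "s ((p + j) mod k) (drop (p mod k) (w_eps s k) ! j) = []" if "j < length (drop (p mod k) (w_eps s k))" for j
  proof -
    have jl: "p mod k + j < k" using that weps(1) by simp
    have "(p + j) mod k = (p mod k + j) mod k" by (simp only: mod_add_left_eq)
    also have "\<dots> = p mod k + j" using jl by (rule mod_less)
    finally have e: "(p + j) mod k = p mod k + j" .
    have "drop (p mod k) (w_eps s k) ! j = w_eps s k ! (p mod k + j)"
      using jl weps(1) by (simp add: nth_drop)
    then show ?thesis using e weps_each[OF jl] by simp
  qed
  then show ?thesis by (simp only: sg_nil_iff) blast
qed

lemma pre: "\<exists>u r. sg p u = D @ r"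
proof -
  define w where "w = (\<lambda>i. if i < length D then D ! i else False)"
  have "\<exists>b :: nat \<Rightarrow> bool list. (\<forall>i. length (b i) = k \<and> sigma_fin s k (b i) \<noteq> []) \<and>
     (\<forall>i j. j < length (sigma_fin s k (b i)) \<longrightarrow>
        w ((\<Sum>m<i. length (sigma_fin s k (b m))) + j) = sigma_fin s k (b i) ! j)"
    using opt unfolding optimal_def by (rule spec)
  then obtain b :: "nat \<Rightarrow> bool list" where bb: "(\<forall>i. length (b i) = k \<and> sigma_fin s k (b i) \<noteq> []) \<and>
     (\<forall>i j. j < length (sigma_fin s k (b i)) \<longrightarrow>
        w ((\<Sum>m<i. length (sigma_fin s k (b m))) + j) = sigma_fin s k (b i) ! j)" ..
  have b1: "\<forall>i. length (b i) = k \<and> sigma_fin s k (b i) \<noteq> []" using bb by (rule conjunct1)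
  have b2: "\<forall>i j. j < length (sigma_fin s k (b i)) \<longrightarrow>
        w ((\<Sum>m<i. length (sigma_fin s k (b m))) + j) = sigma_fin s k (b i) ! j" using bb by (rule conjunct2)
  define C where "C n = concat (map (\<lambda>i. sigma_fin s k (b i)) [0..<n])" for n
  have Clen: "length (C n) = (\<Sum>m<n. length (sigma_fin s k (b m)))" for n
    by (induction n) (auto simp: C_def)
  have Cge: "n \<le> length (C n)" for n
  proof (induction n)
    case (Suc n)
    have "sigma_fin s k (b n) \<noteq> []" using b1 by blast
    then have "length (sigma_fin s k (b n)) \<ge> 1" by (cases "sigma_fin s k (b n)") auto
    then show ?case using Suc by (simp add: C_def)
  qed simp
  have Cw: "\<forall>q<length (C n). C n ! q = w q" for n
  proof (induction n)
    case 0 then show ?case by (simp add: C_def)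
  next
    case (Suc n)
    have CS: "C (Suc n) = C n @ sigma_fin s k (b n)" by (simp add: C_def)
    show ?case
    proof (intro allI impI)
      fix q assume q: "q < length (C (Suc n))"
      show "C (Suc n) ! q = w q"
      proof (cases "q < length (C n)")
        case True then show ?thesis using Suc CS by (simp add: nth_append)
      next
        case False
        define j where "j = q - length (C n)"
        have j: "j < length (sigma_fin s k (b n))" using q False CS by (simp add: j_def)
        have qe: "q = (\<Sum>m<n. length (sigma_fin s k (b m))) + j" using False Clen j_def by simp
        have "w ((\<Sum>m<n. length (sigma_fin s k (b m))) + j) = sigma_fin s k (b n) ! j" using b2 j by blast
        moreover have "w q = w ((\<Sum>m<n. length (sigma_fin s k (b m))) + j)" using qe by (rule arg_cong)
        ultimately have wq: "w q = sigma_fin s k (b n) ! j" by simp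
        have "C (Suc n) ! q = sigma_fin s k (b n) ! j" using CS False by (simp add: nth_append j_def)
        then show ?thesis using wq by simp
      qed
    qed
  qed
  define B where "B n = concat (map b [0..<n])" for n
  have Blen: "length (B n) = n * k" for n
    by (induction n) (use b1 in \<open>auto simp: B_def\<close>)
  have sgB: "sg 0 (B n) = C n" for n
  proof (induction n)
    case 0 then show ?case by (simp add: B_def C_def)
  next
    case (Suc n)
    have "B (Suc n) = B n @ b n" by (simp add: B_def)
    then have "sg 0 (B (Suc n)) = C n @ sg (n * k) (b n)" using Suc Blen by (simp add: sg_append)
    also have "sg (n * k) (b n) = sg 0 (b n)" by (rule sg_mod) simp
    finally show ?case by (simp add: C_def sigma_fin_sg)
  qed
  define n where "n = length D"
  have tk: "take n (C n) = D"
  proof (rule nth_equalityI)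
    show "length (take n (C n)) = length D" using Cge[of n] by (simp add: n_def)
    fix i assume "i < length (take n (C n))"
    then have i: "i < n" "i < length (C n)" by auto
    have "C n ! i = w i" using Cw[of n] i by blast
    then show "take n (C n) ! i = D ! i" using i by (simp add: w_def n_def)
  qed
  have Cn: "C n = D @ drop n (C n)" using tk by (metis append_take_drop_id)
  define u where "u = drop (p mod k) (w_eps s k) @ B n"
  have m0: "(p + length (drop (p mod k) (w_eps s k))) mod k = 0 mod k"
  proof -
    have "p + length (drop (p mod k) (w_eps s k)) = k * (p div k) + k"
    proof -
      have lt: "p mod k < k" using kpos by simp
      have pe: "p = k * (p div k) + p mod k" by simp
      have "length (drop (p mod k) (w_eps s k)) = k - p mod k" using weps(1) by simp
      then show ?thesis using lt pe by linarith
    qed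
    then show ?thesis by simp
  qed
  have "sg p u = sg 0 (B n)" unfolding u_def sg_append pad using sg_mod[OF m0] by simp
  then have "sg p u = D @ drop n (C n)" using sgB Cn by simp
  then show ?thesis by blast
qed

lemma pre1k: "\<exists>u. (\<exists>r. sg p u = D @ r) \<and> has1k k u"
proof -
  obtain u r where "sg p u = D @ r" using pre by blast
  then have "sg p (u @ replicate k True) = D @ (r @ sg (p + length u) (replicate k True))"
    by (simp add: sg_append)
  moreover have "has1k k (u @ replicate k True)" unfolding has1k_def by (metis append_Nil2)
  ultimately show ?thesis by blast
qed

definition it :: "nat \<Rightarrow> bool list \<Rightarrow> bool list" where
  "it n = (sg 0 ^^ n)"

lemma it_0[simp]: "it 0 w = w" by (simp add: it_def)
lemma it_Suc: "it (Suc n) w = sg 0 (it n w)" by (simp add: it_def)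
lemma it_nil: "it n [] = []" by (induction n) (simp_all add: it_Suc)

lemma it_app: "\<exists>X. it n (a @ b) = it n a @ X"
proof (induction n)
  case 0 then show ?case by simp
next
  case (Suc n)
  then obtain X where "it n (a @ b) = it n a @ X" by blast
  then have "it (Suc n) (a @ b) = it (Suc n) a @ sg (length (it n a)) X"
    by (simp add: it_Suc sg_append)
  then show ?case by blast
qed

lemma it_erase: "\<exists>n. it n w = []"
proof -
  have e: "sigma_fin s k = sg 0" by (rule ext) (rule sigma_fin_sg)
  from ce obtain n where "(sigma_fin s k ^^ n) w = []" unfolding completely_erasing_def by blast
  then show ?thesis unfolding it_def e by blast
qed

lemma it_stay: assumes "it n w = []" "n \<le> m" shows "it m w = []"
proof -
  have "it m w = it (m - n) (it n w)"
    unfolding it_def using assms(2) by (metis funpow_add le_add_diff_inverse2 o_apply)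
  then show ?thesis using assms(1) by (simp add: it_nil)
qed

lemma propag:
  assumes H: "\<forall>m<N. \<exists>r. sg (length (it m W)) (u m) = u (Suc m) @ r"
  shows "m \<le> N \<Longrightarrow> \<exists>X. it m (W @ u 0 @ R) = it m W @ u m @ X"
proof (induction m)
  case 0 then show ?case by simp
next
  case (Suc m)
  then obtain X where X: "it m (W @ u 0 @ R) = it m W @ u m @ X" by auto
  have mN: "m < N" using Suc.prems by simp
  then obtain r where r: "sg (length (it m W)) (u m) = u (Suc m) @ r" using H by blast
  have "it (Suc m) (W @ u 0 @ R) = sg 0 (it m W @ u m @ X)" using X by (simp add: it_Suc)
  also have "\<dots> = it (Suc m) W @ sg (length (it m W)) (u m) @ sg (length (it m W) + length (u m)) X"
    by (simp add: sg_append it_Suc)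
  also have "\<dots> = it (Suc m) W @ u (Suc m) @ (r @ sg (length (it m W) + length (u m)) X)"
    using r by simp
  finally show ?case by blast
qed

primrec bk :: "bool list \<Rightarrow> nat \<Rightarrow> bool list \<Rightarrow> nat \<Rightarrow> bool list" where
  "bk W N D 0 = D"
| "bk W N D (Suc d) = (SOME u. (\<exists>r. sg (length (it (N - Suc d) W)) u = bk W N D d @ r) \<and> has1k k u)"

lemma bk_step:
  assumes "m < N"
  shows "(\<exists>r. sg (length (it m W)) (bk W N D (N - m)) = bk W N D (N - Suc m) @ r)
         \<and> has1k k (bk W N D (N - m))"
proof -
  define d where "d = N - Suc m"
  have e1: "N - m = Suc d" and e2: "N - Suc d = m" using assms by (auto simp: d_def)
  have "(\<exists>r. sg (length (it (N - Suc d) W)) (bk W N D (Suc d)) = bk W N D d @ r) \<and> has1k k (bk W N D (Suc d))"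
    unfolding bk.simps by (rule someI_ex) (rule pre1k)
  then show ?thesis unfolding e1 d_def[symmetric] using e2 by simp
qed

lemma piece:
  assumes D: "has1k k D" and m: "m \<le> N"
  shows "\<exists>X. it m (W @ bk W N D N @ R) = it m W @ bk W N D (N - m) @ X"
proof -
  define u where "u m = bk W N D (N - m)" for m
  have H: "\<forall>m<N. \<exists>r. sg (length (it m W)) (u m) = u (Suc m) @ r"
    using bk_step unfolding u_def by blast
  have "\<exists>X. it m (W @ u 0 @ R) = it m W @ u m @ X" by (rule propag[OF H m])
  then show ?thesis unfolding u_def by simp
qed

lemma bk_1k: assumes "has1k k D" "m \<le> N" shows "has1k k (bk W N D (N - m))"
proof (cases "m < N")
  case True then show ?thesis using bk_step by blast
next
  case False then have "N - m = 0" using assms by simp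
  then show ?thesis using assms by simp
qed

lemma has1k_ne: "has1k k u \<Longrightarrow> u \<noteq> []"
  using kpos unfolding has1k_def by auto

definition Dw :: "nat \<Rightarrow> bool \<Rightarrow> bool list" where
  "Dw j b = (if b then [True, True] else [False, False]) @ replicate (j + k) True"

lemma Dw_1k: "has1k k (Dw j b)"
  unfolding has1k_def Dw_def by (rule exI[of _ "(if b then [True, True] else [False, False]) @ replicate j True"],
     rule exI[of _ "[]"]) (simp add: replicate_add)

lemma Dw_len: "length (Dw j b) = j + k + 2" by (simp add: Dw_def)

definition newN :: "(bool list \<Rightarrow> bool list) \<Rightarrow> nat \<Rightarrow> nat \<Rightarrow> nat" where
  "newN Wf j Np = (SOME N. Np < N \<and> (\<forall>bs::bool list. length bs = j \<longrightarrow> it N (Wf bs) = []))"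

lemma newN: "Np < newN Wf j Np \<and> (\<forall>bs::bool list. length bs = j \<longrightarrow> it (newN Wf j Np) (Wf bs) = [])"
proof -
  define F where "F = {bs::bool list. set bs \<subseteq> UNIV \<and> length bs = j}"
  have fF: "finite F" unfolding F_def by (rule finite_lists_length_eq) simp
  define T where "T bs = (SOME n. it n (Wf bs) = [])" for bs
  have T: "it (T bs) (Wf bs) = []" for bs unfolding T_def by (rule someI_ex) (rule it_erase)
  define N where "N = Suc (Np + sum T F)"
  have "Np < N \<and> (\<forall>bs::bool list. length bs = j \<longrightarrow> it N (Wf bs) = [])"
  proof (intro conjI allI impI)
    show "Np < N" by (simp add: N_def)
    fix bs :: "bool list" assume "length bs = j"
    then have "bs \<in> F" by (simp add: F_def)
    then have "T bs \<le> sum T F" by (rule member_le_sum) (simp_all add: fF)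
    then have "T bs \<le> N" by (simp add: N_def)
    then show "it N (Wf bs) = []" by (rule it_stay[OF T])
  qed
  then show ?thesis unfolding newN_def by (rule someI)
qed

fun lev :: "nat \<Rightarrow> (bool list \<Rightarrow> bool list) \<times> nat" where
  "lev 0 = ((\<lambda>_. []), 0)"
| "lev (Suc j) = (let Wf = fst (lev j); N = newN Wf j (snd (lev j)) in
      ((\<lambda>bs. case bs of [] \<Rightarrow> [] | b # bs' \<Rightarrow> Wf bs' @ bk (Wf bs') N (Dw j b) N), N))"

definition Wl :: "nat \<Rightarrow> bool list \<Rightarrow> bool list" where "Wl j = fst (lev j)"
definition Nt :: "nat \<Rightarrow> nat" where "Nt j = snd (lev (Suc j))"

lemma Nt_eq: "Nt j = newN (Wl j) j (snd (lev j))"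
  by (simp add: Nt_def Wl_def Let_def)

lemma Wl_Suc: "Wl (Suc j) (b # bs) = Wl j bs @ bk (Wl j bs) (Nt j) (Dw j b) (Nt j)"
  by (simp add: Nt_eq Wl_def Let_def)

lemma Nt_erase: "length bs = j \<Longrightarrow> it (Nt j) (Wl j bs) = []"
  using newN unfolding Nt_eq by blast

lemma Nt_Suc: "Nt j < Nt (Suc j)"
proof -
  have "snd (lev (Suc j)) < Nt (Suc j)" unfolding Nt_eq by (rule newN[THEN conjunct1])
  then show ?thesis by (simp add: Nt_def)
qed

lemma Nt_ge: "j < Nt j"
proof (induction j)
  case 0
  have "snd (lev 0) < Nt 0" unfolding Nt_eq by (rule newN[THEN conjunct1])
  then show ?case by simp
next
  case (Suc j) then show ?case using Nt_Suc[of j] by simp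
qed

lemma Nt_mono: "strict_mono Nt"
  unfolding strict_mono_Suc_iff using Nt_Suc by blast

definition bt :: "(nat \<Rightarrow> bool) \<Rightarrow> nat \<Rightarrow> bool" where
  "bt t j = (if even j then True else t (fst (prod_decode (j div 2))))"

primrec hist :: "(nat \<Rightarrow> bool) \<Rightarrow> nat \<Rightarrow> bool list" where
  "hist t 0 = []"
| "hist t (Suc j) = bt t j # hist t j"

lemma hist_len: "length (hist t j) = j" by (induction j) auto

definition Wt :: "(nat \<Rightarrow> bool) \<Rightarrow> nat \<Rightarrow> bool list" where
  "Wt t j = Wl j (hist t j)"

lemma Wt_Suc: "Wt t (Suc j) = Wt t j @ bk (Wt t j) (Nt j) (Dw j (bt t j)) (Nt j)"
  by (simp add: Wt_def Wl_Suc)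

lemma Wt_erase: "it (Nt j) (Wt t j) = []"
  unfolding Wt_def by (rule Nt_erase) (rule hist_len)

lemma Wt_piece:
  assumes "m \<le> Nt j"
  shows "\<exists>X. it m (Wt t (Suc j) @ R) = it m (Wt t j) @ bk (Wt t j) (Nt j) (Dw j (bt t j)) (Nt j - m) @ X"
  unfolding Wt_Suc using piece[OF Dw_1k assms] by simp

lemma Wt_prefix: "j \<le> j' \<Longrightarrow> \<exists>r. Wt t j' = Wt t j @ r"
proof (induction j' rule: dec_induct)
  case base then show ?case by simp
next
  case (step n) then show ?case by (auto simp: Wt_Suc)
qed

lemma itWt_prefix: "j \<le> j' \<Longrightarrow> \<exists>r. it m (Wt t j') = it m (Wt t j) @ r"
  using Wt_prefix it_app by metis

lemma itWt_grow: assumes "m \<le> j" shows "Suc (length (it m (Wt t j))) \<le> length (it m (Wt t (Suc j)))"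
proof -
  have "m \<le> Nt j" using Nt_ge[of j] assms by simp
  from Wt_piece[OF this, of t "[]"] obtain X where
    X: "it m (Wt t (Suc j)) = it m (Wt t j) @ bk (Wt t j) (Nt j) (Dw j (bt t j)) (Nt j - m) @ X" by auto
  have "bk (Wt t j) (Nt j) (Dw j (bt t j)) (Nt j - m) \<noteq> []"
    using has1k_ne bk_1k[OF Dw_1k \<open>m \<le> Nt j\<close>] by blast
  then show ?thesis using X by (cases "bk (Wt t j) (Nt j) (Dw j (bt t j)) (Nt j - m)") auto
qed

lemma itWt_len: "d \<le> length (it m (Wt t (m + d)))"
proof (induction d)
  case 0 then show ?case by simp
next
  case (Suc d)
  have "Suc (length (it m (Wt t (m + d)))) \<le> length (it m (Wt t (Suc (m + d))))" by (rule itWt_grow) simp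
  then show ?case using Suc by simp
qed

definition Z :: "(nat \<Rightarrow> bool) \<Rightarrow> nat \<Rightarrow> nat \<Rightarrow> bool" where
  "Z t m i = it m (Wt t (m + i + 1)) ! i"

lemma Zc: assumes "i < length (it m (Wt t J))" shows "Z t m i = it m (Wt t J) ! i"
proof -
  define J0 where "J0 = m + i + 1"
  have i0: "i < length (it m (Wt t J0))" using itWt_len[of "i + 1" m t] by (simp add: J0_def add.assoc)
  define J1 where "J1 = max J J0"
  obtain r where r: "it m (Wt t J1) = it m (Wt t J) @ r" using itWt_prefix[of J J1] by (auto simp: J1_def)
  obtain r0 where r0: "it m (Wt t J1) = it m (Wt t J0) @ r0" using itWt_prefix[of J0 J1] by (auto simp: J1_def)
  have "it m (Wt t J) ! i = it m (Wt t J1) ! i" using r assms by (simp add: nth_append)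
  also have "\<dots> = it m (Wt t J0) ! i" using r0 i0 by (simp add: nth_append)
  finally show ?thesis by (simp add: Z_def J0_def)
qed

lemma Z_block: assumes "m \<le> j" shows "\<exists>p \<ge> length (it m (Wt t j)). \<forall>q<k. Z t m (p + q)"
proof -
  have mN: "m \<le> Nt j" using Nt_ge[of j] assms by simp
  from Wt_piece[OF mN, of t "[]"] obtain X where
    X: "it m (Wt t (Suc j)) = it m (Wt t j) @ bk (Wt t j) (Nt j) (Dw j (bt t j)) (Nt j - m) @ X" by auto
  obtain a b where ab: "bk (Wt t j) (Nt j) (Dw j (bt t j)) (Nt j - m) = a @ replicate k True @ b"
    using bk_1k[OF Dw_1k mN] unfolding has1k_def by blast
  define A where "A = it m (Wt t j)"
  have X2: "it m (Wt t (Suc j)) = A @ a @ replicate k True @ b @ X" using X ab by (simp add: A_def)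
  have "\<forall>q<k. Z t m (length A + length a + q)"
  proof (intro allI impI)
    fix q assume q: "q < k"
    have l: "length A + length a + q < length (it m (Wt t (Suc j)))" using X2 q by simp
    have "it m (Wt t (Suc j)) ! (length A + length a + q) = True"
      using q unfolding X2 by (simp add: nth_append)
    then show "Z t m (length A + length a + q)" using Zc[OF l] by simp
  qed
  then show ?thesis by (intro exI[of _ "length A + length a"]) (simp add: A_def)
qed

lemma Z_inf: "\<forall>N. \<exists>p\<ge>N. Z t m p"
proof
  fix N
  obtain p where p: "p \<ge> length (it m (Wt t (m + N)))" "\<forall>q<k. Z t m (p + q)"
    using Z_block[of m "m + N" t] by auto
  have "N \<le> p" using p(1) itWt_len[of N m t] by simp
  moreover have "Z t m p" using p(2) kpos by (metis add_0_right)
  ultimately show "\<exists>p\<ge>N. Z t m p" by blast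
qed

lemma Z_blk: "\<exists>p. \<forall>q<k. Z t m (p + q)"
  using Z_block[of m m t] by auto

lemma Z_D: assumes "i < length (Dw j (bt t j))" shows "Z t (Nt j) i = Dw j (bt t j) ! i"
proof -
  from Wt_piece[OF order_refl, of j t "[]"] obtain X where
    X: "it (Nt j) (Wt t (Suc j)) = it (Nt j) (Wt t j) @ bk (Wt t j) (Nt j) (Dw j (bt t j)) (Nt j - Nt j) @ X" by auto
  then have X2: "it (Nt j) (Wt t (Suc j)) = Dw j (bt t j) @ X" by (simp add: Wt_erase)
  have l: "i < length (it (Nt j) (Wt t (Suc j)))" using X2 assms by simp
  show ?thesis using Zc[OF l] X2 assms by (simp add: nth_append)
qed

lemma fin_val_le: "fin_val w \<le> 1 - 1 / 2 ^ length w"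
proof (induction w rule: rev_induct)
  case Nil then show ?case by (simp add: fin_val_def)
next
  case (snoc x xs)
  have "bit x / 2 ^ (length xs + 1) \<le> 1 / 2 ^ (length xs + 1)" by (rule term_le)
  then show ?case using snoc fin_val_snoc[of xs x] by (simp add: field_simps)
qed

lemma fin_val_le1: "fin_val w \<le> 1"
proof -
  have "0 \<le> 1 / (2::real) ^ length w" by simp
  then show ?thesis using fin_val_le[of w] by linarith
qed

lemma fin_val_nonneg: "0 \<le> fin_val w"
  unfolding fin_val_def by (intro sum_nonneg) (simp add: bit_def)

lemma sg_map: "length (sg 0 (map u [0..<n])) = pref_len s k u n \<and>
  fin_val (sg 0 (map u [0..<n])) = (\<Sum>j<n. fin_val (s (j mod k) (u j)) / 2 ^ pref_len s k u j)"
proof (induction n)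
  case 0 then show ?case by (simp add: pref_len_def fin_val_def)
next
  case (Suc n)
  have e: "sg 0 (map u [0..<Suc n]) = sg 0 (map u [0..<n]) @ s (n mod k) (u n)"
    by (simp add: sg_snoc)
  have pl: "pref_len s k u (Suc n) = pref_len s k u n + length (s (n mod k) (u n))"
    by (simp add: pref_len_def)
  show ?case using Suc unfolding e by (simp add: fin_val_append pl)
qed

lemma bridge:
  assumes H: "\<forall>n. \<exists>A. n \<le> length A \<and> n \<le> length (sg 0 A) \<and> (\<forall>i<length A. u i = A ! i)
      \<and> (\<forall>i<length (sg 0 A). v i = sg 0 A ! i)"
  shows "sigma_val s k u = inf_val v"
proof -
  define a where "a j = fin_val (s (j mod k) (u j)) / 2 ^ pref_len s k u j" for j
  define P where "P n = pref_len s k u n" for n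
  have ps: "(\<Sum>j<n. a j) = fin_val (sg 0 (map u [0..<n]))" for n using sg_map[of u n] by (simp add: a_def)
  have a0: "0 \<le> a j" for j unfolding a_def by (simp add: fin_val_nonneg)
  have sa: "summable a"
  proof (rule summableI_nonneg_bounded[where x=1])
    show "0 \<le> a n" for n by (rule a0)
    show "sum a {..<n} \<le> 1" for n unfolding ps by (rule fin_val_le1)
  qed
  have l1: "(\<lambda>n. \<Sum>j<n. a j) \<longlonglongrightarrow> sigma_val s k u"
    using summable_LIMSEQ[OF sa] unfolding sigma_val_def a_def by simp
  have agree: "(\<Sum>j<n. a j) = (\<Sum>i<P n. bit (v i) / (2::real) ^ (i + 1))" for n
  proof -
    obtain A where A: "n \<le> length A" "\<forall>i<length A. u i = A ! i" "\<forall>i<length (sg 0 A). v i = sg 0 A ! i"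
      using H by blast
    have mA: "map u [0..<n] = take n A" using A by (intro nth_equalityI) auto
    obtain r where r: "sg 0 A = sg 0 (map u [0..<n]) @ r"
      using sg_append[of 0 "take n A" "drop n A"] mA by auto
    have "map v [0..<P n] = sg 0 (map u [0..<n])"
    proof (rule nth_equalityI)
      show "length (map v [0..<P n]) = length (sg 0 (map u [0..<n]))" using sg_map[of u n] by (simp add: P_def)
      fix i assume i: "i < length (map v [0..<P n])"
      then have i2: "i < length (sg 0 (map u [0..<n]))" using sg_map[of u n] by (simp add: P_def)
      have "v i = sg 0 A ! i" using A(3) i2 r by simp
      also have "\<dots> = sg 0 (map u [0..<n]) ! i" using r i2 by (simp add: nth_append)
      finally show "map v [0..<P n] ! i = sg 0 (map u [0..<n]) ! i" using i by simp
    qed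
    then show ?thesis unfolding ps by (metis fin_val_map)
  qed
  have Pmono: "P n \<le> P n'" if "n \<le> n'" for n n'
    unfolding P_def pref_len_def using that by (intro sum_mono2) auto
  have Ptop: "filterlim P at_top sequentially"
    unfolding filterlim_at_top
  proof
    fix N
    obtain A where A: "N \<le> length (sg 0 A)" "\<forall>i<length A. u i = A ! i" using H by blast
    have mA: "map u [0..<length A] = A" using A by (intro nth_equalityI) auto
    have "N \<le> P (length A)" using A(1) sg_map[of u "length A"] mA by (simp add: P_def)
    then show "eventually (\<lambda>n. N \<le> P n) sequentially"
      unfolding eventually_sequentially using Pmono order_trans by blast
  qed
  have g: "(\<lambda>n. \<Sum>i<n. bit (v i) / (2::real) ^ (i + 1)) \<longlonglongrightarrow> inf_val v"
    unfolding inf_val_def by (rule summable_LIMSEQ[OF inf_summable])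
  have l2: "(\<lambda>n. \<Sum>i<P n. bit (v i) / (2::real) ^ (i + 1)) \<longlonglongrightarrow> inf_val v"
    using filterlim_compose[OF g Ptop] by (simp add: o_def)
  have l3: "(\<lambda>n. \<Sum>j<n. a j) \<longlonglongrightarrow> inf_val v" using l2 agree by simp
  show ?thesis using LIMSEQ_unique[OF l1 l3] .
qed

lemma Z_step: "sigma_val s k (Z t m) = inf_val (Z t (Suc m))"
proof (rule bridge, intro allI)
  fix n
  define A where "A = it m (Wt t (m + (n + 1)))"
  have l1: "n + 1 \<le> length A" unfolding A_def by (rule itWt_len)
  have sA: "sg 0 A = it (Suc m) (Wt t (Suc m + n))" by (simp add: A_def it_Suc)
  have l2: "n \<le> length (sg 0 A)" unfolding sA by (rule itWt_len)
  have c1: "\<forall>i<length A. Z t m i = A ! i" unfolding A_def using Zc by blast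
  have c2: "\<forall>i<length (sg 0 A). Z t (Suc m) i = sg 0 A ! i" unfolding sA using Zc by blast
  show "\<exists>A. n \<le> length A \<and> n \<le> length (sg 0 A) \<and> (\<forall>i<length A. Z t m i = A ! i) \<and>
      (\<forall>i<length (sg 0 A). Z t (Suc m) i = sg 0 A ! i)"
    using l1 l2 c1 c2 by (intro exI[of _ A]) simp
qed

lemma f_step:
  assumes inf: "\<forall>N. \<exists>p\<ge>N. v p" and blk: "\<forall>q<k. v (p0 + q)"
  shows "f_sigma s k (inf_val v) = sigma_val s k v"
proof -
  obtain i0 where "v i0" using inf by blast
  then have pos: "0 < inf_val v" by (rule inf_val_pos)
  have le1: "inf_val v \<le> 1" by (rule inf_val_bounds)
  have tv: "tilde (inf_val v) = v" using inf by (rule tilde_inf_val)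
  have np: "v \<noteq> (\<lambda>i. w_eps s k ! (i mod k))"
  proof
    assume eq: "v = (\<lambda>i. w_eps s k ! (i mod k))"
    have "w_eps s k = replicate k True"
    proof (rule nth_equalityI)
      show "length (w_eps s k) = length (replicate k True)" using weps(1) by simp
      fix i assume "i < length (w_eps s k)"
      then have ik: "i < k" using weps(1) by simp
      define q where "q = (i + k - p0 mod k) mod k"
      have qk: "q < k" using kpos by (simp add: q_def)
      have lt: "p0 mod k < k" using kpos by simp
      have "(p0 + q) mod k = (p0 mod k + (i + k - p0 mod k) mod k) mod k"
        by (simp add: q_def mod_add_left_eq)
      also have "\<dots> = (p0 mod k + (i + k - p0 mod k)) mod k" by (simp add: mod_add_right_eq)
      also have "p0 mod k + (i + k - p0 mod k) = i + k" using lt by simp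
      also have "(i + k) mod k = i" using ik by simp
      finally have pq: "(p0 + q) mod k = i" .
      have "v (p0 + q)" using blk qk by blast
      then have "w_eps s k ! i" using eq pq by simp
      then show "w_eps s k ! i = replicate k True ! i" using ik by simp
    qed
    then show False using wne by simp
  qed
  show ?thesis unfolding f_sigma_def using pos le1 tv np by simp
qed

lemma Z_iter: "(f_sigma s k ^^ m) (inf_val (Z t 0)) = inf_val (Z t m)"
proof (induction m)
  case 0 then show ?case by simp
next
  case (Suc m)
  obtain p0 where p0: "\<forall>q<k. Z t m (p0 + q)" using Z_blk by blast
  have "(f_sigma s k ^^ Suc m) (inf_val (Z t 0)) = f_sigma s k (inf_val (Z t m))" using Suc by simp
  also have "\<dots> = sigma_val s k (Z t m)" by (rule f_step[OF Z_inf p0])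
  also have "\<dots> = inf_val (Z t (Suc m))" by (rule Z_step)
  finally show ?case .
qed

lemma close: assumes "bt t j = bt t' j"
  shows "\<bar>inf_val (Z t (Nt j)) - inf_val (Z t' (Nt j))\<bar> \<le> 1 / 2 ^ j"
proof (rule inf_val_close)
  fix i assume "i < j"
  then have i1: "i < length (Dw j (bt t j))" and i2: "i < length (Dw j (bt t' j))" by (simp_all add: Dw_len)
  show "Z t (Nt j) i = Z t' (Nt j) i" using Z_D[OF i1] Z_D[OF i2] assms by simp
qed

lemma far: assumes "bt t j \<noteq> bt t' j"
  shows "1 / 2 \<le> \<bar>inf_val (Z t (Nt j)) - inf_val (Z t' (Nt j))\<bar>"
proof -
  have z: "Z u (Nt j) 0 = bt u j \<and> Z u (Nt j) 1 = bt u j" for u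
  proof -
    have a: "0 < length (Dw j (bt u j))" "1 < length (Dw j (bt u j))" by (simp_all add: Dw_len)
    show ?thesis using Z_D[OF a(1)] Z_D[OF a(2)] by (simp add: Dw_def)
  qed
  show ?thesis
  proof (cases "bt t j")
    case True
    then have "3/4 \<le> inf_val (Z t (Nt j))" using z[of t] by (intro inf_val_TT) auto
    moreover have "inf_val (Z t' (Nt j)) \<le> 1/4" using z[of t'] True assms by (intro inf_val_FF) auto
    ultimately show ?thesis by simp
  next
    case False
    then have "inf_val (Z t (Nt j)) \<le> 1/4" using z[of t] by (intro inf_val_FF) auto
    moreover have "3/4 \<le> inf_val (Z t' (Nt j))" using z[of t'] False assms by (intro inf_val_TT) auto
    ultimately show ?thesis by simp
  qed
qed

lemma bt_even: "bt t (2 * i) = True" by (simp add: bt_def)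
lemma bt_odd: "bt t (2 * prod_encode (m, r) + 1) = t m" by (simp add: bt_def)

lemma pe_mono: "strict_mono (\<lambda>r. Nt (2 * prod_encode (m, r) + 1))"
proof -
  have "prod_encode (m, r) < prod_encode (m, Suc r)" for r
    by (simp add: prod_encode_def)
  then have "strict_mono (\<lambda>r. 2 * prod_encode (m, r) + 1)" unfolding strict_mono_Suc_iff by simp
  then show ?thesis using Nt_mono unfolding strict_mono_def by blast
qed

lemma ev_mono: "strict_mono (\<lambda>i. Nt (2 * i))"
  using Nt_mono unfolding strict_mono_def by simp

theorem LY_main:
  "\<exists>S \<subseteq> {0..1::real}. uncountable S \<and>
    (\<forall>x\<in>S. \<forall>y\<in>S. x \<noteq> y \<longrightarrow>
       liminf (\<lambda>n. ereal \<bar>(f_sigma s k ^^ n) x - (f_sigma s k ^^ n) y\<bar>) = 0 \<and>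
       limsup (\<lambda>n. ereal \<bar>(f_sigma s k ^^ n) x - (f_sigma s k ^^ n) y\<bar>) > 0)"
proof -
  define X where "X t = inf_val (Z t 0)" for t
  have XI: "(f_sigma s k ^^ n) (X t) = inf_val (Z t n)" for n t unfolding X_def by (rule Z_iter)
  have inj: "inj X"
  proof (rule injI)
    fix t t' assume eq: "X t = X t'"
    show "t = t'"
    proof (rule ccontr)
      assume "t \<noteq> t'"
      then obtain m where m: "t m \<noteq> t' m" by auto
      define j where "j = 2 * prod_encode (m, 0) + 1"
      have "bt t j = t m" "bt t' j = t' m" unfolding j_def by (rule bt_odd)+
      then have "bt t j \<noteq> bt t' j" using m by simp
      then have "1/2 \<le> \<bar>inf_val (Z t (Nt j)) - inf_val (Z t' (Nt j))\<bar>" by (rule far)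
      moreover have "inf_val (Z t (Nt j)) = inf_val (Z t' (Nt j))" using eq XI[symmetric] by metis
      ultimately show False by simp
    qed
  qed
  have unc: "uncountable (UNIV :: (nat \<Rightarrow> bool) set)" by (rule uncount_fun)
  have S1: "range X \<subseteq> {0..1}" using inf_val_bounds unfolding X_def by auto
  have S2: "uncountable (range X)" using countable_image_inj_on[OF _ inj] unc by blast
  have S3: "liminf (\<lambda>n. ereal \<bar>(f_sigma s k ^^ n) x - (f_sigma s k ^^ n) y\<bar>) = 0 \<and>
       limsup (\<lambda>n. ereal \<bar>(f_sigma s k ^^ n) x - (f_sigma s k ^^ n) y\<bar>) > 0"
    if x: "x \<in> range X" and y: "y \<in> range X" and xy: "x \<noteq> y" for x y
  proof -
    obtain t t' where xt: "x = X t" and yt: "y = X t'" using x y by blast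
    have tt: "t \<noteq> t'" using xy xt yt by blast
    define E where "E n = ereal \<bar>(f_sigma s k ^^ n) x - (f_sigma s k ^^ n) y\<bar>" for n
    have E: "E n = ereal \<bar>inf_val (Z t n) - inf_val (Z t' n)\<bar>" for n
      unfolding E_def xt yt XI by simp
    have li1: "0 \<le> liminf E" by (rule Liminf_bounded) (simp add: E_def)
    define r where "r i = Nt (2 * i)" for i
    have rm: "strict_mono r" unfolding r_def by (rule ev_mono)
    define e where "e i = \<bar>inf_val (Z t (r i)) - inf_val (Z t' (r i))\<bar>" for i
    have e0: "0 \<le> e i" for i by (simp add: e_def)
    have e1: "e i \<le> (1/4) ^ i" for i
    proof -
      have "e i \<le> 1 / 2 ^ (2 * i)" unfolding e_def r_def by (rule close) (simp add: bt_even)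
      also have "(1::real) / 2 ^ (2 * i) = (1/4) ^ i" by (simp add: power_mult power_one_over)
      finally show ?thesis .
    qed
    have "e \<longlonglongrightarrow> 0"
      by (rule real_tendsto_sandwich[of "\<lambda>_. 0" e sequentially "\<lambda>i. (1/4) ^ i"])
        (auto simp: e0 e1 intro: LIMSEQ_realpow_zero)
    then have "(\<lambda>i. ereal (e i)) \<longlonglongrightarrow> ereal 0" by (rule tendsto_ereal)
    moreover have "(E \<circ> r) = (\<lambda>i. ereal (e i))" by (simp add: E e_def o_def)
    ultimately have "(E \<circ> r) \<longlonglongrightarrow> 0" by (simp add: zero_ereal_def)
    then have "liminf (E \<circ> r) = 0" by (intro lim_imp_Liminf) simp_all
    moreover have "liminf E \<le> liminf (E \<circ> r)" by (rule liminf_subseq_mono[OF rm])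
    ultimately have L: "liminf E = 0" using li1 by simp
    obtain m where m: "t m \<noteq> t' m" using tt by auto
    define r' where "r' i = Nt (2 * prod_encode (m, i) + 1)" for i
    have rm': "strict_mono r'" unfolding r'_def by (rule pe_mono)
    have "ereal (1/2) \<le> (E \<circ> r') i" for i
    proof -
      have "bt t (2 * prod_encode (m, i) + 1) = t m" "bt t' (2 * prod_encode (m, i) + 1) = t' m"
        by (rule bt_odd)+
      then have "bt t (2 * prod_encode (m, i) + 1) \<noteq> bt t' (2 * prod_encode (m, i) + 1)"
        using m by simp
      then have "1/2 \<le> \<bar>inf_val (Z t (r' i)) - inf_val (Z t' (r' i))\<bar>" unfolding r'_def by (rule far)
      then show ?thesis by (simp add: E r'_def)
    qed
    then have "ereal (1/2) \<le> limsup (E \<circ> r')" by (intro le_Limsup) simp_all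
    also have "\<dots> \<le> limsup E" by (rule limsup_subseq_mono[OF rm'])
    finally have "0 < limsup E" by (rule less_le_trans[rotated]) simp
    then show ?thesis using L unfolding E_def by simp
  qed
  show ?thesis using S1 S2 S3 by (intro exI[of _ "range X"]) blast
qed

end

theorem mainTheorem17:
  fixes s :: "nat \<Rightarrow> bool \<Rightarrow> bool list" and k :: nat
  assumes "k \<ge> 2"
    and "completely_erasing s k"
    and "w_eps s k \<noteq> replicate k True"
    and "optimal s k"
  shows "\<exists>S \<subseteq> {0..1::real}. uncountable S \<and>
    (\<forall>x\<in>S. \<forall>y\<in>S. x \<noteq> y \<longrightarrow>
       liminf (\<lambda>n. ereal \<bar>(f_sigma s k ^^ n) x - (f_sigma s k ^^ n) y\<bar>) = 0 \<and>
       limsup (\<lambda>n. ereal \<bar>(f_sigma s k ^^ n) x - (f_sigma s k ^^ n) y\<bar>) > 0)"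
proof -
  interpret LY s k using assms by unfold_locales
  show ?thesis by (rule LY_main)
qed

end
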